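(* Let $(X,\Sigma)$ be a measurable space and $p$ a transition function on it with associated operator $A$ on $ba(X,\Sigma)$. Suppose the Markov chain has a singular cycle of sets of states $S=\{D_1,\dots,D_m\}$. Then $A$ has a singular cycle of finitely additive measures $K=\{\mu_1,\dots,\mu_m\}\subset S_{ba}$ such that $\mu_i(D_j)=1$ if $i=j$ and $\mu_i(D_j)=0$ if $i\ne j$.
   Context: $X$ is an arbitrary infinite set and $\Sigma$ a $\sigma$-algebra of subsets of $X$ containing all one-point sets. $ba(X,\Sigma)$ denotes the space of bounded finitely additive real-valued measures on $\Sigma$, and $S_{ba}=\{\mu\in ba(X,\Sigma):\mu\ge0,\ \mu(X)=1\}$. A transition function is a map $p(x,E)$ with $0\le p(x,E)\le1$, $p(x,X)=1$, $p(\cdot,E)$ bounded $\Sigma$-measurable for every $E\in\Sigma$, and $p(x,\cdot)$ countably additive for every $x\in X$. The Markov operator is $A\mu(E)=\int_X p(x,E)\,\mu(dx)$. A cycle of measures of $A$ is a finite numbered set $\{\mu_1,\dots,\mu_m\}$ of pairwise different positive finitely additive measures with $A\mu_i=\mu_{i+1}$ ($1\le i\le m-1$), $A\mu_m=\mu_1$; it is singular if its measures are pairwise singular, where positive $\mu,\nu$ are singular if there are disjoint $D,D'\in\Sigma$ with $\mu(D)=\mu(X)$, $\nu(D')=\nu(X)$. A cycle of sets of states is a system of pairwise distinct sets $D_1,\dots,D_m\in\Sigma$ with $p(x,D_{i+1})=1$ for all $x\in D_i$ ($1\le i\le m-1$) and $p(x,D_1)=1$ for all $x\in D_m$; it is singular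 if $D_i\cap D_j=\emptyset$ for $i\ne j$. *)

theory Defs
  imports "HOL-Analysis.Analysis"
begin

definition standing_space :: "'a set \<Rightarrow> 'a set set \<Rightarrow> bool" where
  "standing_space X \<Sigma> \<longleftrightarrow> sigma_algebra X \<Sigma> \<and> infinite X \<and> (\<forall>x\<in>X. {x} \<in> \<Sigma>)"

text \<open>Bounded finitely additive real-valued measures on \<Sigma> (the space ba(X,\<Sigma>)).
  Only the values on \<Sigma> are relevant.\<close>
definition is_ba :: "'a set set \<Rightarrow> ('a set \<Rightarrow> real) \<Rightarrow> bool" where
  "is_ba \<Sigma> \<mu> \<longleftrightarrow>
     (\<forall>A\<in>\<Sigma>. \<forall>B\<in>\<Sigma>. A \<inter> B = {} \<longrightarrow> \<mu> (A \<union> B) = \<mu> A + \<mu> B) \<and>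
     (\<exists>c. \<forall>A\<in>\<Sigma>. \<bar>\<mu> A\<bar> \<le> c)"

definition positive_fa :: "'a set set \<Rightarrow> ('a set \<Rightarrow> real) \<Rightarrow> bool" where
  "positive_fa \<Sigma> \<mu> \<longleftrightarrow> (\<forall>A\<in>\<Sigma>. 0 \<le> \<mu> A)"

definition S_ba :: "'a set \<Rightarrow> 'a set set \<Rightarrow> ('a set \<Rightarrow> real) set" where
  "S_ba X \<Sigma> = {\<mu>. is_ba \<Sigma> \<mu> \<and> positive_fa \<Sigma> \<mu> \<and> \<mu> X = 1}"

definition meas_eq :: "'a set set \<Rightarrow> ('a set \<Rightarrow> real) \<Rightarrow> ('a set \<Rightarrow> real) \<Rightarrow> bool" where
  "meas_eq \<Sigma> \<mu> \<nu> \<longleftrightarrow> (\<forall>E\<in>\<Sigma>. \<mu> E = \<nu> E)"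

definition transition_function ::
  "'a set \<Rightarrow> 'a set set \<Rightarrow> ('a \<Rightarrow> 'a set \<Rightarrow> real) \<Rightarrow> bool" where
  "transition_function X \<Sigma> p \<longleftrightarrow>
     (\<forall>x\<in>X. \<forall>E\<in>\<Sigma>. 0 \<le> p x E \<and> p x E \<le> 1) \<and>
     (\<forall>x\<in>X. p x X = 1) \<and>
     (\<forall>E\<in>\<Sigma>. \<forall>c::real. {x\<in>X. p x E \<le> c} \<in> \<Sigma>) \<and>
     (\<forall>x\<in>X. \<forall>F::nat \<Rightarrow> 'a set. range F \<subseteq> \<Sigma> \<longrightarrow> disjoint_family F \<longrightarrow>
              (\<lambda>n. p x (F n)) sums p x (\<Union>n. F n))"

text \<open>Integral of a bounded \<Sigma>-measurable function with respect to a bounded finitely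
  additive measure: limit of the integrals of the simple functions
  floor((n+1) f)/(n+1), which converge uniformly to f.\<close>
definition fa_integral ::
  "'a set \<Rightarrow> ('a set \<Rightarrow> real) \<Rightarrow> ('a \<Rightarrow> real) \<Rightarrow> real" where
  "fa_integral X \<mu> f =
     lim (\<lambda>n. \<Sum>k\<in>(\<lambda>x. \<lfloor>real (Suc n) * f x\<rfloor>) ` X.
                 (real_of_int k / real (Suc n)) * \<mu> {x\<in>X. \<lfloor>real (Suc n) * f x\<rfloor> = k})"

definition markov_op ::
  "'a set \<Rightarrow> ('a \<Rightarrow> 'a set \<Rightarrow> real) \<Rightarrow> ('a set \<Rightarrow> real) \<Rightarrow> ('a set \<Rightarrow> real)" where
  "markov_op X p \<mu> = (\<lambda>E. fa_integral X \<mu> (\<lambda>x. p x E))"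

definition singular_meas ::
  "'a set \<Rightarrow> 'a set set \<Rightarrow> ('a set \<Rightarrow> real) \<Rightarrow> ('a set \<Rightarrow> real) \<Rightarrow> bool" where
  "singular_meas X \<Sigma> \<mu> \<nu> \<longleftrightarrow>
     (\<exists>D\<in>\<Sigma>. \<exists>D'\<in>\<Sigma>. D \<inter> D' = {} \<and> \<mu> D = \<mu> X \<and> \<nu> D' = \<nu> X)"

text \<open>A cycle of measures \<mu> 0, ..., \<mu> (m-1) (indices shifted to start at 0);
  successor of index i is (i+1) mod m.\<close>
definition cycle_measures ::
  "'a set \<Rightarrow> 'a set set \<Rightarrow> ('a \<Rightarrow> 'a set \<Rightarrow> real) \<Rightarrow> nat \<Rightarrow> (nat \<Rightarrow> 'a set \<Rightarrow> real) \<Rightarrow> bool" where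
  "cycle_measures X \<Sigma> p m \<mu> \<longleftrightarrow> m \<ge> 1 \<and>
     (\<forall>i<m. is_ba \<Sigma> (\<mu> i) \<and> positive_fa \<Sigma> (\<mu> i)) \<and>
     (\<forall>i<m. \<forall>j<m. i \<noteq> j \<longrightarrow> \<not> meas_eq \<Sigma> (\<mu> i) (\<mu> j)) \<and>
     (\<forall>i<m. meas_eq \<Sigma> (markov_op X p (\<mu> i)) (\<mu> ((i + 1) mod m)))"

definition singular_cycle_measures ::
  "'a set \<Rightarrow> 'a set set \<Rightarrow> ('a \<Rightarrow> 'a set \<Rightarrow> real) \<Rightarrow> nat \<Rightarrow> (nat \<Rightarrow> 'a set \<Rightarrow> real) \<Rightarrow> bool" where
  "singular_cycle_measures X \<Sigma> p m \<mu> \<longleftrightarrow> cycle_measures X \<Sigma> p m \<mu> \<and>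
     (\<forall>i<m. \<forall>j<m. i \<noteq> j \<longrightarrow> singular_meas X \<Sigma> (\<mu> i) (\<mu> j))"

text \<open>A cycle of sets of states D 0, ..., D (m-1) (indices shifted to start at 0).
  The sets of states are taken to be nonempty.\<close>
definition cycle_sets ::
  "'a set set \<Rightarrow> ('a \<Rightarrow> 'a set \<Rightarrow> real) \<Rightarrow> nat \<Rightarrow> (nat \<Rightarrow> 'a set) \<Rightarrow> bool" where
  "cycle_sets \<Sigma> p m D \<longleftrightarrow> m \<ge> 1 \<and>
     (\<forall>i<m. D i \<in> \<Sigma> \<and> D i \<noteq> {}) \<and>
     (\<forall>i<m. \<forall>j<m. i \<noteq> j \<longrightarrow> D i \<noteq> D j) \<and>
     (\<forall>i<m. \<forall>x\<in>D i. p x (D ((i + 1) mod m)) = 1)"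

definition singular_cycle_sets ::
  "'a set set \<Rightarrow> ('a \<Rightarrow> 'a set \<Rightarrow> real) \<Rightarrow> nat \<Rightarrow> (nat \<Rightarrow> 'a set) \<Rightarrow> bool" where
  "singular_cycle_sets \<Sigma> p m D \<longleftrightarrow> cycle_sets \<Sigma> p m D \<and>
     (\<forall>i<m. \<forall>j<m. i \<noteq> j \<longrightarrow> D i \<inter> D j = {})"

end

theory Submission
  imports Defs
begin


definition ultra :: "'b filter \<Rightarrow> bool" where
  "ultra U \<longleftrightarrow> U \<noteq> bot \<and> (\<forall>P. eventually P U \<or> eventually (\<lambda>x. \<not> P x) U)"

lemma ultra_exists:
  fixes F :: "'b filter"
  assumes F: "F \<noteq> bot"
  shows "\<exists>U. U \<le> F \<and> ultra U"
proof -
  define R where "R = {(b, a). a \<noteq> bot \<and> a \<le> b \<and> b \<le> (F::'b filter)}"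
  have FR: "Field R = {G. G \<noteq> bot \<and> G \<le> F}"
    by (auto simp: Field_def R_def bot_unique)
  have "\<exists>m\<in>Field R. \<forall>a\<in>Field R. (m, a) \<in> R \<longrightarrow> a = m"
  proof (rule Zorns_po_lemma)
    show "Partial_order R"
      by (auto simp: R_def partial_order_on_def preorder_on_def
          antisym_def refl_on_def trans_def Field_def bot_unique)
    show "\<exists>u\<in>Field R. \<forall>a\<in>C. (a, u) \<in> R" if C: "C \<in> Chains R" for C
    proof (cases "C = {}")
      case True
      then show ?thesis using F by (auto simp: FR)
    next
      case False
      have nb: "bot \<notin> C" using C by (auto simp: Chains_def R_def)
      have "Inf C = bot \<longleftrightarrow> (\<exists>x\<in>C. x = bot)"
        unfolding trivial_limit_def using C False
        by (intro eventually_Inf_base) (auto simp: Chains_def R_def)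
      then have i1: "Inf C \<noteq> bot" using nb by auto
      from False obtain x where "x \<in> C" by auto
      with C have i2: "Inf C \<le> F"
        by (auto intro!: Inf_lower2[of x] simp: Chains_def R_def)
      show ?thesis
      proof (rule bexI[of _ "Inf C"])
        show "Inf C \<in> Field R" using FR i1 i2 by auto
        show "\<forall>a\<in>C. (a, Inf C) \<in> R"
          using i1 i2 C nb by (auto simp: R_def Chains_def intro: Inf_lower)
      qed
    qed
  qed
  then obtain U where U0: "U \<in> Field R" and mx0: "\<forall>a\<in>Field R. (U, a) \<in> R \<longrightarrow> a = U"
    by blast
  have U: "U \<noteq> bot" "U \<le> F" using U0 FR by auto
  have mx: "G = U" if "G \<noteq> bot" "G \<le> U" for G
  proof -
    have "G \<in> Field R" using that U FR by auto
    moreover have "(U, G) \<in> R" using that U unfolding R_def by auto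
    ultimately show ?thesis using mx0 by blast
  qed
  have "eventually P U \<or> eventually (\<lambda>x. \<not> P x) U" for P
  proof (rule disjCI)
    assume "\<not> eventually (\<lambda>x. \<not> P x) U"
    then have "inf U (principal {x. P x}) \<noteq> bot"
      by (simp add: trivial_limit_def eventually_inf_principal)
    then have "inf U (principal {x. P x}) = U"
      using mx by simp
    moreover have "eventually P (inf U (principal {x. P x}))"
      by (simp add: eventually_inf_principal)
    ultimately show "eventually P U" by simp
  qed
  then show ?thesis using U by (auto simp: ultra_def)
qed

lemma ultra_free_exists: "\<exists>U::nat filter. U \<le> sequentially \<and> ultra U"
  using ultra_exists[of sequentially] by simp

lemma ultra_bounded_conv:
  fixes a :: "nat \<Rightarrow> real"
  assumes U: "ultra U" and b: "\<And>n. \<bar>a n\<bar> \<le> c"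
  shows "\<exists>L. (a \<longlongrightarrow> L) U"
proof -
  define G where "G = filtermap a U"
  have Gnb: "G \<noteq> bot" using U by (simp add: G_def ultra_def filtermap_bot_iff)
  have "eventually (\<lambda>x. x \<in> {-c..c}) G"
  proof -
    have "\<forall>n. a n \<in> {-c..c}" 
    proof
      fix n have "\<bar>a n\<bar> \<le> c" by (rule b)
      then show "a n \<in> {-c..c}" by (simp add: abs_le_iff)
    qed
    then show ?thesis by (simp add: G_def eventually_filtermap always_eventually)
  qed
  then obtain L where L: "inf (nhds L) G \<noteq> bot"
    using compact_filter[of "{-c..c}"] Gnb compact_Icc by blast
  have "(a \<longlongrightarrow> L) U"
  proof (rule topological_tendstoI)
    fix S assume S: "open S" "L \<in> S"
    show "eventually (\<lambda>n. a n \<in> S) U"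
    proof (rule ccontr)
      assume "\<not> eventually (\<lambda>n. a n \<in> S) U"
      then have "eventually (\<lambda>n. a n \<notin> S) U" using U by (auto simp: ultra_def)
      then have e1: "eventually (\<lambda>x. x \<notin> S) G" by (simp add: G_def eventually_filtermap)
      have e2: "eventually (\<lambda>x. x \<in> S) (nhds L)" using S eventually_nhds by blast
      have "eventually (\<lambda>x. False) (inf (nhds L) G)"
        using eventually_inf[of _ "nhds L" G] e1 e2 by blast
      then show False using L by (simp add: trivial_limit_def)
    qed
  qed
  then show ?thesis by blast
qed



definition pfa :: "'a set set \<Rightarrow> 'a set \<Rightarrow> ('a set \<Rightarrow> real) \<Rightarrow> bool" where
  "pfa M X \<nu> \<longleftrightarrow> (\<forall>A\<in>M. \<forall>B\<in>M. A \<inter> B = {} \<longrightarrow> \<nu> (A \<union> B) = \<nu> A + \<nu> B) \<and>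
     (\<forall>A\<in>M. 0 \<le> \<nu> A) \<and> \<nu> X = 1"

definition part :: "'a set set \<Rightarrow> 'a set \<Rightarrow> 'b set \<Rightarrow> ('b \<Rightarrow> 'a set) \<Rightarrow> bool" where
  "part M X K B \<longleftrightarrow> finite K \<and> (\<forall>k\<in>K. B k \<in> M) \<and> disjoint_family_on B K \<and> (\<Union>k\<in>K. B k) = X"

lemma pfa_empty:
  assumes "sigma_algebra X M" "pfa M X \<nu>" shows "\<nu> {} = 0"
proof -
  interpret S: sigma_algebra X M by fact
  have "\<nu> ({} \<union> {}) = \<nu> {} + \<nu> {}" using assms(2) S.empty_sets unfolding pfa_def by blast
  then show ?thesis by simp
qed

lemma pfa_sum:
  assumes "sigma_algebra X M" "pfa M X \<nu>" "finite K" "\<forall>k\<in>K. C k \<in> M" "disjoint_family_on C K"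
  shows "\<nu> (\<Union>k\<in>K. C k) = (\<Sum>k\<in>K. \<nu> (C k))"
  using assms(3-5)
proof (induction K rule: finite_induct)
  case empty
  then show ?case using pfa_empty[OF assms(1,2)] by simp
next
  case (insert k K)
  interpret S: sigma_algebra X M by fact
  have u: "(\<Union>k\<in>K. C k) \<in> M" using insert by (intro S.finite_UN) auto
  have d: "C k \<inter> (\<Union>k\<in>K. C k) = {}"
    using insert(2,5) by (auto simp: disjoint_family_on_def)
  have "\<nu> (\<Union>k\<in>insert k K. C k) = \<nu> (C k \<union> (\<Union>k\<in>K. C k))" by simp
  also have "\<dots> = \<nu> (C k) + \<nu> (\<Union>k\<in>K. C k)"
    using assms(2) u d insert(4) unfolding pfa_def by blast
  also have "\<nu> (\<Union>k\<in>K. C k) = (\<Sum>k\<in>K. \<nu> (C k))"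
    using insert by (auto simp: disjoint_family_on_def)
  finally show ?case using insert by simp
qed

lemma pfa_mono:
  assumes "sigma_algebra X M" "pfa M X \<nu>" "A \<in> M" "B \<in> M" "A \<subseteq> B"
  shows "\<nu> A \<le> \<nu> B"
proof -
  interpret S: sigma_algebra X M by fact
  have "B = A \<union> (B - A)" using assms by auto
  then have "\<nu> B = \<nu> A + \<nu> (B - A)" using assms unfolding pfa_def
    by (metis Diff_disjoint S.Diff)
  moreover have "0 \<le> \<nu> (B - A)" using assms unfolding pfa_def by auto
  ultimately show ?thesis by simp
qed

lemma pfa_le1:
  assumes "sigma_algebra X M" "pfa M X \<nu>" "A \<in> M"
  shows "\<nu> A \<le> 1" "0 \<le> \<nu> A"
proof -
  interpret S: sigma_algebra X M by fact
  show "\<nu> A \<le> 1" using pfa_mono[OF assms(1,2,3) S.top] S.sets_into_space assms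
    unfolding pfa_def by auto
  show "0 \<le> \<nu> A" using assms unfolding pfa_def by auto
qed

lemma pfa_split:
  assumes "sigma_algebra X M" "pfa M X \<nu>" "part M X K B" "A \<in> M"
  shows "\<nu> A = (\<Sum>l\<in>K. \<nu> (A \<inter> B l))"
proof -
  interpret S: sigma_algebra X M by fact
  have "A = (\<Union>l\<in>K. A \<inter> B l)" using assms(3,4) S.sets_into_space unfolding part_def by auto
  moreover have "\<nu> (\<Union>l\<in>K. A \<inter> B l) = (\<Sum>l\<in>K. \<nu> (A \<inter> B l))"
    using assms(3,4) unfolding part_def
    by (intro pfa_sum[OF assms(1,2)]) (auto simp: disjoint_family_on_def)
  ultimately show ?thesis by simp
qed

lemma part_total:
  assumes "sigma_algebra X M" "pfa M X \<nu>" "part M X K B"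
  shows "(\<Sum>l\<in>K. \<nu> (B l)) = 1"
proof -
  have "\<nu> (\<Union>l\<in>K. B l) = (\<Sum>l\<in>K. \<nu> (B l))"
    using assms(3) unfolding part_def by (intro pfa_sum[OF assms(1,2)]) auto
  then show ?thesis using assms(2,3) unfolding part_def pfa_def by simp
qed

lemma L1:
  assumes sa: "sigma_algebra X M" and pf: "pfa M X \<nu>" and P1: "part M X K B" and P2: "part M X K' B'"
    and lo: "\<forall>k\<in>K. \<forall>x\<in>B k. a k \<le> f x"
    and up: "\<forall>l\<in>K'. \<forall>x\<in>B' l. f x \<le> b l + \<delta>"
  shows "(\<Sum>k\<in>K. a k * \<nu> (B k)) \<le> (\<Sum>l\<in>K'. b l * \<nu> (B' l)) + \<delta>"
proof -
  interpret S: sigma_algebra X M by fact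
  have BM: "B k \<in> M" if "k \<in> K" for k using P1 that unfolding part_def by auto
  have BM': "B' l \<in> M" if "l \<in> K'" for l using P2 that unfolding part_def by auto
  have "(\<Sum>k\<in>K. a k * \<nu> (B k)) = (\<Sum>k\<in>K. \<Sum>l\<in>K'. a k * \<nu> (B k \<inter> B' l))"
    using pfa_split[OF sa pf P2 BM] by (simp add: sum_distrib_left)
  also have "\<dots> \<le> (\<Sum>k\<in>K. \<Sum>l\<in>K'. (b l + \<delta>) * \<nu> (B k \<inter> B' l))"
  proof (intro sum_mono)
    fix k l assume kl: "k \<in> K" "l \<in> K'"
    show "a k * \<nu> (B k \<inter> B' l) \<le> (b l + \<delta>) * \<nu> (B k \<inter> B' l)"
    proof (cases "B k \<inter> B' l = {}")
      case True then show ?thesis using pfa_empty[OF sa pf] by simp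
    next
      case False
      then obtain x where "x \<in> B k" "x \<in> B' l" by auto
      then have "a k \<le> b l + \<delta>" using lo up kl by force
      moreover have "0 \<le> \<nu> (B k \<inter> B' l)" using pfa_le1(2)[OF sa pf] BM BM' kl by blast
      ultimately show ?thesis by (rule mult_right_mono)
    qed
  qed
  also have "\<dots> = (\<Sum>l\<in>K'. (b l + \<delta>) * (\<Sum>k\<in>K. \<nu> (B' l \<inter> B k)))"
    by (subst sum.swap) (simp add: sum_distrib_left Int_commute)
  also have "\<dots> = (\<Sum>l\<in>K'. (b l + \<delta>) * \<nu> (B' l))"
    using pfa_split[OF sa pf P1 BM'] by simp
  also have "\<dots> = (\<Sum>l\<in>K'. b l * \<nu> (B' l)) + \<delta> * (\<Sum>l\<in>K'. \<nu> (B' l))"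
    by (simp add: distrib_right sum.distrib sum_distrib_left)
  also have "\<dots> = (\<Sum>l\<in>K'. b l * \<nu> (B' l)) + \<delta>"
    using part_total[OF sa pf P2] by simp
  finally show ?thesis .
qed



definition meas :: "'a set set \<Rightarrow> 'a set \<Rightarrow> ('a \<Rightarrow> real) \<Rightarrow> bool" where
  "meas M X f \<longleftrightarrow> (\<forall>c. {x\<in>X. f x \<le> c} \<in> M) \<and> (\<forall>x\<in>X. 0 \<le> f x \<and> f x \<le> 1)"

definition Kset :: "'a set \<Rightarrow> ('a \<Rightarrow> real) \<Rightarrow> nat \<Rightarrow> int set" where
  "Kset X f N = (\<lambda>x. \<lfloor>real (Suc N) * f x\<rfloor>) ` X"

definition lev :: "'a set \<Rightarrow> ('a \<Rightarrow> real) \<Rightarrow> nat \<Rightarrow> int \<Rightarrow> 'a set" where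
  "lev X f N k = {x\<in>X. \<lfloor>real (Suc N) * f x\<rfloor> = k}"

definition Ssum :: "'a set \<Rightarrow> ('a set \<Rightarrow> real) \<Rightarrow> ('a \<Rightarrow> real) \<Rightarrow> nat \<Rightarrow> real" where
  "Ssum X \<nu> f N = (\<Sum>k\<in>Kset X f N. (real_of_int k / real (Suc N)) * \<nu> (lev X f N k))"

lemma fa_integral_Ssum: "fa_integral X \<nu> f = lim (Ssum X \<nu> f)"
  unfolding fa_integral_def Ssum_def Kset_def lev_def by simp

lemma meas_lt:
  assumes "sigma_algebra X M" "meas M X f"
  shows "{x\<in>X. f x < c} \<in> M"
proof -
  interpret S: sigma_algebra X M by fact
  have "{x\<in>X. f x < c} = (\<Union>n. {x\<in>X. f x \<le> c - inverse (real (Suc n))})"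
  proof (auto)
    fix x assume "x \<in> X" "f x < c"
    then obtain n where "inverse (real (Suc n)) < c - f x"
      using reals_Archimedean[of "c - f x"] by auto
    then show "\<exists>n. f x \<le> c - inverse (1 + real n)" by (intro exI[of _ n]) simp
  next
    fix x n assume "f x \<le> c - inverse (1 + real n)"
    moreover have "0 < inverse (1 + real n)" by simp
    ultimately show "f x < c" by linarith
  qed
  also have "\<dots> \<in> M" using assms(2) unfolding meas_def by (intro S.countable_UN') auto
  finally show ?thesis .
qed

lemma meas_ge:
  assumes "sigma_algebra X M" "meas M X f"
  shows "{x\<in>X. c \<le> f x} \<in> M"
proof -
  interpret S: sigma_algebra X M by fact
  have "{x\<in>X. c \<le> f x} = X - {x\<in>X. f x < c}" by auto
  then show ?thesis using S.Diff[OF S.top meas_lt[OF assms]] by simp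
qed

lemma lev_in:
  assumes "sigma_algebra X M" "meas M X f"
  shows "lev X f N k \<in> M"
proof -
  interpret S: sigma_algebra X M by fact
  define r where "r = real (Suc N)"
  have r: "r > 0" by (simp add: r_def)
  have "lev X f N k = {x\<in>X. real_of_int k / r \<le> f x} \<inter> {x\<in>X. f x < (real_of_int k + 1) / r}"
    unfolding lev_def r_def[symmetric] using r
    by (auto simp: floor_eq_iff field_simps)
  then show ?thesis using meas_lt[OF assms] meas_ge[OF assms] by auto
qed

lemma Kset_finite:
  assumes "meas M X f" shows "finite (Kset X f N)"
proof -
  have "Kset X f N \<subseteq> {0..int (Suc N)}"
  proof
    fix k assume "k \<in> Kset X f N"
    then obtain x where x: "x \<in> X" "k = \<lfloor>real (Suc N) * f x\<rfloor>" unfolding Kset_def by auto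
    have a: "0 \<le> real (Suc N) * f x" and b: "real (Suc N) * f x \<le> real (Suc N)"
      using assms x(1) unfolding meas_def by (auto intro: mult_left_le)
    have "\<lfloor>real (Suc N) * f x\<rfloor> \<le> \<lfloor>real (Suc N)\<rfloor>" by (rule floor_mono[OF b])
    moreover have "0 \<le> \<lfloor>real (Suc N) * f x\<rfloor>" using a by simp
    ultimately show "k \<in> {0..int (Suc N)}" using x(2) by simp
  qed
  then show ?thesis by (rule finite_subset) simp
qed

lemma part_lev:
  assumes "sigma_algebra X M" "meas M X f"
  shows "part M X (Kset X f N) (lev X f N)"
  unfolding part_def using Kset_finite[OF assms(2)] lev_in[OF assms]
  by (auto simp: disjoint_family_on_def lev_def Kset_def)

lemma lev_lo:
  "\<forall>k\<in>Kset X f N. \<forall>x\<in>lev X f N k. real_of_int k / real (Suc N) \<le> f x"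
  by (auto simp: lev_def field_simps)

lemma lev_up:
  "\<forall>k\<in>Kset X f N. \<forall>x\<in>lev X f N k. f x \<le> real_of_int k / real (Suc N) + inverse (real (Suc N))"
proof (intro ballI)
  fix k x assume "x \<in> lev X f N k"
  then have "real (Suc N) * f x < real_of_int k + 1" unfolding lev_def
    by (auto simp: floor_eq_iff)
  then show "f x \<le> real_of_int k / real (Suc N) + inverse (real (Suc N))"
    by (simp add: field_simps)
qed

lemma Ssum_cmp:
  assumes "sigma_algebra X M" "pfa M X \<nu>" "meas M X f"
  shows "Ssum X \<nu> f N \<le> Ssum X \<nu> f K + inverse (real (Suc K))"
  unfolding Ssum_def
  by (rule L1[OF assms(1,2) part_lev[OF assms(1,3)] part_lev[OF assms(1,3)] lev_lo lev_up])

lemma Ssum_conv: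
  assumes sa: "sigma_algebra X M" and pf: "pfa M X \<nu>" and mf: "meas M X f"
  shows "Ssum X \<nu> f \<longlonglongrightarrow> fa_integral X \<nu> f"
    and "\<bar>Ssum X \<nu> f N - fa_integral X \<nu> f\<bar> \<le> inverse (real (Suc N))"
proof -
  let ?S = "Ssum X \<nu> f"
  have d: "\<bar>?S n - ?S k\<bar> \<le> inverse (real (Suc n)) + inverse (real (Suc k))" for n k
  proof -
    have "0 \<le> inverse (real (Suc n))" "0 \<le> inverse (real (Suc k))" by auto
    then show ?thesis unfolding abs_le_iff
      using Ssum_cmp[OF assms, of n k] Ssum_cmp[OF assms, of k n] by linarith
  qed
  have "Cauchy ?S"
  proof (rule CauchyI)
    fix e :: real assume "0 < e"
    then obtain K where K: "inverse (real (Suc K)) < e / 2"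
      using reals_Archimedean[of "e/2"] by auto
    show "\<exists>M. \<forall>m\<ge>M. \<forall>n\<ge>M. norm (?S m - ?S n) < e"
    proof (intro exI allI impI)
      fix m n assume "K \<le> m" "K \<le> n"
      then have i: "inverse (real (Suc m)) \<le> inverse (real (Suc K))"
        "inverse (real (Suc n)) \<le> inverse (real (Suc K))"
        by (auto intro!: le_imp_inverse_le)
      have "\<bar>?S m - ?S n\<bar> < e" using d[of m n] K i by linarith
      then show "norm (?S m - ?S n) < e" by simp
    qed
  qed
  then have "?S \<longlonglongrightarrow> lim ?S" by (simp add: Cauchy_convergent_iff convergent_LIMSEQ_iff)
  then show c: "?S \<longlonglongrightarrow> fa_integral X \<nu> f" by (simp add: fa_integral_Ssum)
  have "(\<lambda>k. \<bar>?S N - ?S k\<bar>) \<longlonglongrightarrow> \<bar>?S N - fa_integral X \<nu> f\<bar>"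
    by (intro tendsto_intros c)
  moreover have "(\<lambda>k. inverse (real (Suc N)) + inverse (real (Suc k))) \<longlonglongrightarrow> inverse (real (Suc N)) + 0"
    by (intro tendsto_intros LIMSEQ_inverse_real_of_nat)
  ultimately show "\<bar>?S N - fa_integral X \<nu> f\<bar> \<le> inverse (real (Suc N))"
    using d by (intro tendsto_le[OF trivial_limit_sequentially]) auto
qed

lemma eps_le:
  fixes x y c :: real
  assumes "\<And>N. x \<le> y + c * inverse (real (Suc N))"
  shows "x \<le> y"
proof -
  have "(\<lambda>N. y + c * inverse (real (Suc N))) \<longlonglongrightarrow> y + c * 0"
    by (intro tendsto_intros LIMSEQ_inverse_real_of_nat)
  then show ?thesis using assms
    by (intro tendsto_le[OF trivial_limit_sequentially, of _ _ "\<lambda>_. x"]) auto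
qed

lemma LB:
  assumes sa: "sigma_algebra X M" and pf: "pfa M X \<nu>" and mf: "meas M X f"
    and P: "part M X K B" and lo: "\<forall>k\<in>K. \<forall>x\<in>B k. a k \<le> f x"
  shows "(\<Sum>k\<in>K. a k * \<nu> (B k)) \<le> fa_integral X \<nu> f"
proof (rule eps_le[where c=2])
  fix N
  have "(\<Sum>k\<in>K. a k * \<nu> (B k)) \<le> Ssum X \<nu> f N + inverse (real (Suc N))"
    unfolding Ssum_def by (rule L1[OF sa pf P part_lev[OF sa mf] lo lev_up])
  then show "(\<Sum>k\<in>K. a k * \<nu> (B k)) \<le> fa_integral X \<nu> f + 2 * inverse (real (Suc N))"
    using Ssum_conv(2)[OF sa pf mf, of N] by linarith
qed

lemma UB:
  assumes sa: "sigma_algebra X M" and pf: "pfa M X \<nu>" and mf: "meas M X f"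
    and P: "part M X K B" and up: "\<forall>k\<in>K. \<forall>x\<in>B k. f x \<le> b k + \<delta>"
  shows "fa_integral X \<nu> f \<le> (\<Sum>k\<in>K. b k * \<nu> (B k)) + \<delta>"
proof (rule eps_le[where c=1])
  fix N
  have "Ssum X \<nu> f N \<le> (\<Sum>k\<in>K. b k * \<nu> (B k)) + \<delta>"
    unfolding Ssum_def by (rule L1[OF sa pf part_lev[OF sa mf] P lev_lo up])
  then show "fa_integral X \<nu> f \<le> (\<Sum>k\<in>K. b k * \<nu> (B k)) + \<delta> + 1 * inverse (real (Suc N))"
    using Ssum_conv(2)[OF sa pf mf, of N] by linarith
qed

lemma part_triv:
  assumes "sigma_algebra X M" shows "part M X {()} (\<lambda>_. X)"
proof -
  interpret S: sigma_algebra X M by fact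
  show ?thesis unfolding part_def by (auto simp: disjoint_family_on_def)
qed

lemma int_nonneg:
  assumes sa: "sigma_algebra X M" and pf: "pfa M X \<nu>" and mf: "meas M X f"
  shows "0 \<le> fa_integral X \<nu> f"
  using LB[OF sa pf mf part_triv[OF sa], of "\<lambda>_. 0"] mf unfolding meas_def by simp

lemma int_le1:
  assumes sa: "sigma_algebra X M" and pf: "pfa M X \<nu>" and mf: "meas M X f"
  shows "fa_integral X \<nu> f \<le> 1"
  using UB[OF sa pf mf part_triv[OF sa], of "\<lambda>_. 1" 0] mf pf unfolding meas_def pfa_def by simp

lemma int_one:
  assumes sa: "sigma_algebra X M" and pf: "pfa M X \<nu>" and mf: "meas M X f"
    and D: "D \<in> M" "\<nu> D = 1" "\<forall>x\<in>D. f x = 1"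
  shows "fa_integral X \<nu> f = 1"
proof -
  interpret S: sigma_algebra X M by fact
  have DX: "D \<subseteq> X" using D S.sets_into_space by auto
  have P: "part M X {True, False} (\<lambda>b. if b then D else X - D)"
    unfolding part_def using D DX by (auto simp: disjoint_family_on_def)
  have "(\<Sum>k\<in>{True, False}. (if k then 1 else 0) * \<nu> (if k then D else X - D)) \<le> fa_integral X \<nu> f"
    using D mf by (intro LB[OF sa pf mf P]) (auto simp: meas_def)
  then show ?thesis using D int_le1[OF sa pf mf] by simp
qed



lemma prod_sum:
  assumes sa: "sigma_algebra X M" and pf: "pfa M X \<nu>" and P1: "part M X K B" and P2: "part M X K' B'"
  shows "(\<Sum>(k,l)\<in>K\<times>K'. (a k + b l) * \<nu> (B k \<inter> B' l)) =
         (\<Sum>k\<in>K. a k * \<nu> (B k)) + (\<Sum>l\<in>K'. b l * \<nu> (B' l))"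
proof -
  have BM: "B k \<in> M" if "k \<in> K" for k using P1 that unfolding part_def by auto
  have BM': "B' l \<in> M" if "l \<in> K'" for l using P2 that unfolding part_def by auto
  have "(\<Sum>(k,l)\<in>K\<times>K'. (a k + b l) * \<nu> (B k \<inter> B' l)) =
        (\<Sum>k\<in>K. \<Sum>l\<in>K'. (a k + b l) * \<nu> (B k \<inter> B' l))"
    by (rule sum.cartesian_product[symmetric])
  also have "\<dots> = (\<Sum>k\<in>K. \<Sum>l\<in>K'. a k * \<nu> (B k \<inter> B' l)) + (\<Sum>k\<in>K. \<Sum>l\<in>K'. b l * \<nu> (B k \<inter> B' l))"
    by (simp add: distrib_right sum.distrib)
  also have "(\<Sum>k\<in>K. \<Sum>l\<in>K'. a k * \<nu> (B k \<inter> B' l)) = (\<Sum>k\<in>K. a k * \<nu> (B k))"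
    using pfa_split[OF sa pf P2 BM] by (simp add: sum_distrib_left)
  also have "(\<Sum>k\<in>K. \<Sum>l\<in>K'. b l * \<nu> (B k \<inter> B' l)) = (\<Sum>l\<in>K'. \<Sum>k\<in>K. b l * \<nu> (B' l \<inter> B k))"
    by (subst sum.swap) (simp add: Int_commute)
  also have "\<dots> = (\<Sum>l\<in>K'. b l * \<nu> (B' l))"
    using pfa_split[OF sa pf P1 BM'] by (simp add: sum_distrib_left)
  finally show ?thesis .
qed

lemma part_prod:
  assumes sa: "sigma_algebra X M" and P1: "part M X K B" and P2: "part M X K' B'"
  shows "part M X (K\<times>K') (\<lambda>(k,l). B k \<inter> B' l)"
proof -
  interpret S: sigma_algebra X M by fact
  have f: "finite (K\<times>K')" using P1 P2 unfolding part_def by auto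
  have m: "\<forall>z\<in>K\<times>K'. (\<lambda>(k,l). B k \<inter> B' l) z \<in> M"
    using P1 P2 unfolding part_def by auto
  have d: "disjoint_family_on (\<lambda>(k,l). B k \<inter> B' l) (K\<times>K')"
  proof (unfold disjoint_family_on_def, intro ballI impI)
    fix z w assume zw: "z \<in> K\<times>K'" "w \<in> K\<times>K'" "z \<noteq> w"
    obtain k l k' l' where e: "z = (k,l)" "w = (k',l')" by force
    show "(case z of (k, l) \<Rightarrow> B k \<inter> B' l) \<inter> (case w of (k, l) \<Rightarrow> B k \<inter> B' l) = {}"
    proof (cases "k = k'")
      case True
      then have "l \<noteq> l'" using zw e by auto
      then have "B' l \<inter> B' l' = {}" using P2 zw e unfolding part_def disjoint_family_on_def by auto
      then show ?thesis using e by auto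
    next
      case False
      then have "B k \<inter> B k' = {}" using P1 zw e unfolding part_def disjoint_family_on_def by auto
      then show ?thesis using e by auto
    qed
  qed
  have c: "(\<Union>z\<in>K\<times>K'. (\<lambda>(k,l). B k \<inter> B' l) z) = X"
  proof
    show "(\<Union>z\<in>K\<times>K'. (\<lambda>(k,l). B k \<inter> B' l) z) \<subseteq> X"
      using P1 unfolding part_def by auto
    show "X \<subseteq> (\<Union>z\<in>K\<times>K'. (\<lambda>(k,l). B k \<inter> B' l) z)"
    proof
      fix x assume x: "x \<in> X"
      then obtain k where k: "k \<in> K" "x \<in> B k" using P1 unfolding part_def by auto
      obtain l where l: "l \<in> K'" "x \<in> B' l" using P2 x unfolding part_def by auto
      show "x \<in> (\<Union>z\<in>K\<times>K'. (\<lambda>(k,l). B k \<inter> B' l) z)"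
        using k l by (intro UN_I[of "(k,l)"]) auto
    qed
  qed
  show ?thesis unfolding part_def using f m d c by blast
qed

lemma int_add:
  assumes sa: "sigma_algebra X M" and pf: "pfa M X \<nu>" and mf: "meas M X f" and mg: "meas M X g"
    and mh: "meas M X h" and hfg: "\<forall>x\<in>X. h x = f x + g x"
  shows "fa_integral X \<nu> h = fa_integral X \<nu> f + fa_integral X \<nu> g"
proof -
  let ?K = "\<lambda>N. Kset X f N \<times> Kset X g N"
  let ?B = "\<lambda>N. (\<lambda>(k,l). lev X f N k \<inter> lev X g N l)"
  let ?a = "\<lambda>N k. real_of_int k / real (Suc N)"
  have P: "part M X (?K N) (?B N)" for N
    by (rule part_prod[OF sa part_lev[OF sa mf] part_lev[OF sa mg]])
  have ps: "(\<Sum>(k,l)\<in>?K N. (?a N k + ?a N l) * \<nu> (lev X f N k \<inter> lev X g N l)) =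
      Ssum X \<nu> f N + Ssum X \<nu> g N" for N
    unfolding Ssum_def by (rule prod_sum[OF sa pf part_lev[OF sa mf] part_lev[OF sa mg]])
  have LX: "lev X f N k \<subseteq> X" for N k by (auto simp: lev_def)
  have up: "\<forall>z\<in>?K N. \<forall>x\<in>?B N z. h x \<le> (\<lambda>(k,l). ?a N k + ?a N l) z + 2 * inverse (real (Suc N))" for N
  proof (intro ballI)
    fix z x assume z: "z \<in> ?K N" and x: "x \<in> ?B N z"
    obtain k l where kl: "z = (k,l)" by force
    have "f x \<le> ?a N k + inverse (real (Suc N))" "g x \<le> ?a N l + inverse (real (Suc N))"
      using lev_up[of X f N] lev_up[of X g N] z x kl by auto
    moreover have "h x = f x + g x" using hfg x LX kl by auto
    ultimately show "h x \<le> (\<lambda>(k,l). ?a N k + ?a N l) z + 2 * inverse (real (Suc N))"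
      using kl by simp
  qed
  have lo: "\<forall>z\<in>?K N. \<forall>x\<in>?B N z. (\<lambda>(k,l). ?a N k + ?a N l) z \<le> h x" for N
  proof (intro ballI)
    fix z x assume z: "z \<in> ?K N" and x: "x \<in> ?B N z"
    obtain k l where kl: "z = (k,l)" by force
    have "?a N k \<le> f x" "?a N l \<le> g x"
      using lev_lo[of X f N] lev_lo[of X g N] z x kl by auto
    moreover have "h x = f x + g x" using hfg x LX kl by auto
    ultimately show "(\<lambda>(k,l). ?a N k + ?a N l) z \<le> h x"
      using kl by simp
  qed
  have s1: "(\<Sum>z\<in>?K N. (\<lambda>(k,l). ?a N k + ?a N l) z * \<nu> (?B N z)) = Ssum X \<nu> f N + Ssum X \<nu> g N" for N
    using ps[of N] by (simp add: case_prod_beta)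
  have "fa_integral X \<nu> h \<le> fa_integral X \<nu> f + fa_integral X \<nu> g"
  proof (rule eps_le[where c=4])
    fix N
    have "fa_integral X \<nu> h \<le> Ssum X \<nu> f N + Ssum X \<nu> g N + 2 * inverse (real (Suc N))"
      using UB[OF sa pf mh P up] s1 by simp
    then show "fa_integral X \<nu> h \<le> fa_integral X \<nu> f + fa_integral X \<nu> g + 4 * inverse (real (Suc N))"
      using Ssum_conv(2)[OF sa pf mf, of N] Ssum_conv(2)[OF sa pf mg, of N] by linarith
  qed
  moreover have "fa_integral X \<nu> f + fa_integral X \<nu> g \<le> fa_integral X \<nu> h"
  proof (rule eps_le[where c=2])
    fix N
    have "Ssum X \<nu> f N + Ssum X \<nu> g N \<le> fa_integral X \<nu> h"
      using LB[OF sa pf mh P lo] s1 by simp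
    then show "fa_integral X \<nu> f + fa_integral X \<nu> g \<le> fa_integral X \<nu> h + 2 * inverse (real (Suc N))"
      using Ssum_conv(2)[OF sa pf mf, of N] Ssum_conv(2)[OF sa pf mg, of N] by linarith
  qed
  ultimately show ?thesis by linarith
qed

lemma tf_empty:
  assumes sa: "sigma_algebra X M" and tf: "transition_function X M p" and x: "x \<in> X"
  shows "p x {} = 0"
proof -
  interpret S: sigma_algebra X M by fact
  have h: "\<forall>x\<in>X. \<forall>F::nat \<Rightarrow> 'a set. range F \<subseteq> M \<longrightarrow> disjoint_family F \<longrightarrow>
              (\<lambda>n. p x (F n)) sums p x (\<Union>n. F n)"
    using tf unfolding transition_function_def by blast
  have "(\<lambda>n. p x ((\<lambda>n::nat. {}) n)) sums p x (\<Union>n. (\<lambda>n::nat. {}) n)"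
    by (rule h[rule_format, OF x]) (auto simp: disjoint_family_on_def)
  then have s: "(\<lambda>n. p x {}) sums p x {}" by simp
  then have "(\<lambda>n. p x {}) \<longlonglongrightarrow> 0" using summable_LIMSEQ_zero sums_summable by blast
  then show ?thesis using LIMSEQ_unique tendsto_const by blast
qed

lemma tf_add:
  assumes sa: "sigma_algebra X M" and tf: "transition_function X M p" and x: "x \<in> X"
    and AB: "A \<in> M" "B \<in> M" "A \<inter> B = {}"
  shows "p x (A \<union> B) = p x A + p x B"
proof -
  interpret S: sigma_algebra X M by fact
  define F where "F = (\<lambda>n::nat. if n = 0 then A else if n = 1 then B else {})"
  have r: "range F \<subseteq> M" using AB by (auto simp: F_def)
  have d: "disjoint_family F" using AB by (auto simp: F_def disjoint_family_on_def)
  have u: "(\<Union>n. F n) = A \<union> B"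
  proof
    show "(\<Union>n. F n) \<subseteq> A \<union> B" by (auto simp: F_def split: if_splits)
    have "F 0 = A" "F 1 = B" by (auto simp: F_def)
    then show "A \<union> B \<subseteq> (\<Union>n. F n)" by (metis UN_upper Un_least UNIV_I)
  qed
  have h: "\<forall>x\<in>X. \<forall>F::nat \<Rightarrow> 'a set. range F \<subseteq> M \<longrightarrow> disjoint_family F \<longrightarrow>
              (\<lambda>n. p x (F n)) sums p x (\<Union>n. F n)"
    using tf unfolding transition_function_def by blast
  have "(\<lambda>n. p x (F n)) sums p x (\<Union>n. F n)" by (rule h[rule_format, OF x r d])
  then have s1: "(\<lambda>n. p x (F n)) sums p x (A \<union> B)" using u by simp
  have "(\<lambda>n. p x (F n)) sums (\<Sum>n\<in>{0,1}. p x (F n))"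
    by (rule sums_finite) (auto simp: F_def tf_empty[OF sa tf x])
  then have s2: "(\<lambda>n. p x (F n)) sums (p x A + p x B)" by (simp add: F_def)
  show ?thesis using sums_unique2[OF s1 s2] .
qed

lemma tf_meas:
  assumes "transition_function X M p" "E \<in> M"
  shows "meas M X (\<lambda>x. p x E)"
  using assms unfolding transition_function_def meas_def by auto

lemma markov_pfa:
  assumes sa: "sigma_algebra X M" and tf: "transition_function X M p" and pf: "pfa M X \<nu>"
  shows "pfa M X (markov_op X p \<nu>)"
proof -
  interpret S: sigma_algebra X M by fact
  have add: "markov_op X p \<nu> (A \<union> B) = markov_op X p \<nu> A + markov_op X p \<nu> B"
    if "A \<in> M" "B \<in> M" "A \<inter> B = {}" for A B
    unfolding markov_op_def
    using that by (intro int_add[OF sa pf] tf_meas[OF tf] tf_add[OF sa tf] ballI) auto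
  have pos: "0 \<le> markov_op X p \<nu> A" if "A \<in> M" for A
    unfolding markov_op_def using that by (intro int_nonneg[OF sa pf] tf_meas[OF tf])
  have one: "markov_op X p \<nu> X = 1"
    unfolding markov_op_def
    using tf pf unfolding transition_function_def pfa_def
    by (intro int_one[OF sa pf tf_meas[OF tf S.top] S.top]) auto
  show ?thesis unfolding pfa_def using add pos one by blast
qed



primrec lam :: "'a set \<Rightarrow> ('a \<Rightarrow> 'a set \<Rightarrow> real) \<Rightarrow> 'a \<Rightarrow> nat \<Rightarrow> 'a set \<Rightarrow> real" where
  "lam X p x0 0 = (\<lambda>E. if x0 \<in> E then 1 else 0)"
| "lam X p x0 (Suc j) = markov_op X p (lam X p x0 j)"

lemma lam_pfa:
  assumes sa: "sigma_algebra X M" and tf: "transition_function X M p" and x0: "x0 \<in> X"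
  shows "pfa M X (lam X p x0 j)"
proof (induction j)
  case 0
  show ?case unfolding pfa_def using x0 by auto
next
  case (Suc j)
  then show ?case using markov_pfa[OF sa tf] by simp
qed

lemma lam_D:
  assumes sa: "sigma_algebra X M" and tf: "transition_function X M p"
    and sc: "singular_cycle_sets M p m D" and x0: "x0 \<in> D 0" "x0 \<in> X"
  shows "lam X p x0 j (D (j mod m)) = 1"
proof (induction j)
  case 0
  then show ?case using x0 by simp
next
  case (Suc j)
  have m: "m \<ge> 1" using sc unfolding singular_cycle_sets_def cycle_sets_def by auto
  then have jm: "j mod m < m" by simp
  have DM: "D (j mod m) \<in> M" "D (Suc j mod m) \<in> M"
    using sc jm m unfolding singular_cycle_sets_def cycle_sets_def by auto
  have p1: "\<forall>x\<in>D (j mod m). p x (D (Suc j mod m)) = 1"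
    using sc jm unfolding singular_cycle_sets_def cycle_sets_def by (auto simp: mod_Suc_eq)
  have "fa_integral X (lam X p x0 j) (\<lambda>x. p x (D (Suc j mod m))) = 1"
    by (rule int_one[OF sa lam_pfa[OF sa tf x0(2)] tf_meas[OF tf DM(2)] DM(1) Suc p1])
  then show ?case by (simp add: markov_op_def)
qed

lemma lam_D0:
  assumes sa: "sigma_algebra X M" and tf: "transition_function X M p"
    and sc: "singular_cycle_sets M p m D" and x0: "x0 \<in> D 0" "x0 \<in> X"
    and l: "l < m" "l \<noteq> j mod m"
  shows "lam X p x0 j (D l) = 0"
proof -
  have m: "m \<ge> 1" using sc unfolding singular_cycle_sets_def cycle_sets_def by auto
  then have jm: "j mod m < m" by simp
  have DM: "D (j mod m) \<in> M" "D l \<in> M"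
    using sc jm l unfolding singular_cycle_sets_def cycle_sets_def by auto
  have dj: "D (j mod m) \<inter> D l = {}"
    using sc jm l unfolding singular_cycle_sets_def by auto
  interpret S: sigma_algebra X M by fact
  have pf: "pfa M X (lam X p x0 j)" by (rule lam_pfa[OF sa tf x0(2)])
  have "lam X p x0 j (D (j mod m) \<union> D l) = lam X p x0 j (D (j mod m)) + lam X p x0 j (D l)"
    using pf DM dj unfolding pfa_def by blast
  moreover have "lam X p x0 j (D (j mod m) \<union> D l) \<le> 1"
    using pfa_le1[OF sa pf] DM by blast
  moreover have "0 \<le> lam X p x0 j (D l)" using pfa_le1[OF sa pf] DM by blast
  ultimately show ?thesis using lam_D[OF assms(1-5)] by simp
qed

lemma lam_Dij:
  assumes sa: "sigma_algebra X M" and tf: "transition_function X M p"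
    and sc: "singular_cycle_sets M p m D" and x0: "x0 \<in> D 0" "x0 \<in> X"
    and ij: "i < m" "j < m"
  shows "lam X p x0 (k * m + i) (D j) = (if i = j then 1 else 0)"
proof -
  have e: "(k * m + i) mod m = i" using ij by simp
  show ?thesis
    using lam_D[OF assms(1-5), of "k*m+i"] lam_D0[OF assms(1-5) ij(2), of "k*m+i"] e by auto
qed



theorem theorem4p5:
  fixes X :: "'a set" and \<Sigma> :: "'a set set" and p :: "'a \<Rightarrow> 'a set \<Rightarrow> real"
    and m :: nat and D :: "nat \<Rightarrow> 'a set"
  assumes "standing_space X \<Sigma>"
    and "transition_function X \<Sigma> p"
    and "singular_cycle_sets \<Sigma> p m D"
  shows "\<exists>\<mu> :: nat \<Rightarrow> 'a set \<Rightarrow> real.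
           singular_cycle_measures X \<Sigma> p m \<mu> \<and>
           (\<forall>i<m. \<mu> i \<in> S_ba X \<Sigma>) \<and>
           (\<forall>i<m. \<forall>j<m. \<mu> i (D j) = (if i = j then 1 else 0))"
proof -
  have sa: "sigma_algebra X \<Sigma>" using assms(1) unfolding standing_space_def by auto
  note tf = assms(2) and sc = assms(3)
  interpret S: sigma_algebra X \<Sigma> by fact
  have m1: "m \<ge> 1" using sc unfolding singular_cycle_sets_def cycle_sets_def by auto
  have DM: "D j \<in> \<Sigma>" if "j < m" for j using sc that unfolding singular_cycle_sets_def cycle_sets_def by auto
  have "D 0 \<noteq> {}" using sc m1 unfolding singular_cycle_sets_def cycle_sets_def by auto
  then obtain x0 where x0D: "x0 \<in> D 0" by auto
  have x0: "x0 \<in> X" using x0D DM[of 0] m1 S.sets_into_space by auto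
  obtain U :: "nat filter" where Useq: "U \<le> sequentially" and U: "ultra U"
    using ultra_free_exists by blast
  have Unb: "U \<noteq> bot" using U unfolding ultra_def by auto
  define L where "L = lam X p x0"
  have Lpfa: "pfa \<Sigma> X (L j)" for j unfolding L_def by (rule lam_pfa[OF sa tf x0])
  have L01: "0 \<le> L j E" "L j E \<le> 1" if "E \<in> \<Sigma>" for j E
    using pfa_le1[OF sa Lpfa that] by auto
  define avg where "avg i E n = (\<Sum>k<Suc n. L (k*m+i) E) / real (Suc n)" for i E n
  define \<mu> where "\<mu> i E = Lim U (avg i E)" for i E
  have avg01: "0 \<le> avg i E n \<and> avg i E n \<le> 1" if "E \<in> \<Sigma>" for i E n
  proof -
    have "0 \<le> (\<Sum>k<Suc n. L (k*m+i) E)" using L01[OF that] by (simp add: sum_nonneg)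
    moreover have "(\<Sum>k<Suc n. L (k*m+i) E) \<le> of_nat (card {..<Suc n}) * 1"
      using L01[OF that] by (intro sum_bounded_above) auto
    ultimately show ?thesis by (simp add: avg_def divide_le_eq)
  qed
  have bconv: "\<exists>l. (a \<longlongrightarrow> l) U" if "\<And>n. 0 \<le> a n \<and> a n \<le> 1" for a :: "nat \<Rightarrow> real"
    using ultra_bounded_conv[OF U, of a 1] that by (simp add: abs_le_iff)
  have c1: "(avg i E \<longlongrightarrow> \<mu> i E) U" if EM: "E \<in> \<Sigma>" for i E
  proof -
    obtain l where "(avg i E \<longlongrightarrow> l) U" using bconv[of "avg i E"] avg01[OF EM] by blast
    then show ?thesis unfolding \<mu>_def using tendsto_Lim[OF Unb] by metis
  qed
  have const_lim: "\<mu> i E = c" if "E \<in> \<Sigma>" "\<And>n. avg i E n = c" for i E c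
  proof -
    have "avg i E = (\<lambda>n. c)" using that(2) by (rule ext)
    then have "(avg i E \<longlongrightarrow> c) U" by simp
    then show ?thesis using tendsto_unique[OF Unb c1[OF that(1)]] by simp
  qed
  have \<mu>pfa: "pfa \<Sigma> X (\<mu> i)" for i
  proof -
    have add: "\<mu> i (A \<union> B) = \<mu> i A + \<mu> i B" if "A \<in> \<Sigma>" "B \<in> \<Sigma>" "A \<inter> B = {}" for A B
    proof -
      have "avg i (A \<union> B) n = avg i A n + avg i B n" for n
        using Lpfa that unfolding avg_def pfa_def by (simp add: sum.distrib add_divide_distrib)
      then have "avg i (A \<union> B) = (\<lambda>n. avg i A n + avg i B n)" by (rule ext)
      then have "(avg i (A \<union> B) \<longlongrightarrow> \<mu> i A + \<mu> i B) U"
        using tendsto_add[OF c1[OF that(1), of i] c1[OF that(2), of i]] by simp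
      then show ?thesis using tendsto_unique[OF Unb c1[OF S.Un[OF that(1,2)]]] by simp
    qed
    have pos: "0 \<le> \<mu> i A" if "A \<in> \<Sigma>" for A
      using tendsto_le[OF Unb c1[OF that] tendsto_const] avg01[OF that] by auto
    have one: "\<mu> i X = 1"
    proof (rule const_lim[OF S.top])
      fix n
      have "L (k*m+i) X = 1" for k using Lpfa unfolding pfa_def by auto
      then show "avg i X n = 1" unfolding avg_def by simp
    qed
    show ?thesis unfolding pfa_def using add pos one by blast
  qed
  have \<mu>D: "\<mu> i (D j) = (if i = j then 1 else 0)" if "i < m" "j < m" for i j
  proof (rule const_lim[OF DM[OF that(2)]])
    fix n
    have "L (k*m+i) (D j) = (if i = j then 1 else 0)" for k
      unfolding L_def by (rule lam_Dij[OF sa tf sc x0D x0 that])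
    then show "avg i (D j) n = (if i = j then 1 else 0)" unfolding avg_def by simp
  qed
  have markov: "markov_op X p (\<mu> i) E = \<mu> ((i + 1) mod m) E" if im: "i < m" and E: "E \<in> \<Sigma>" for i E
  proof -
    define f where "f = (\<lambda>x. p x E)"
    have mf: "meas \<Sigma> X f" unfolding f_def by (rule tf_meas[OF tf E])
    define T where "T n = (\<Sum>k<Suc n. L (k*m+i+1) E) / real (Suc n)" for n
    have T01: "0 \<le> T n \<and> T n \<le> 1" for n
      using avg01[OF E, of "i+1" n] unfolding T_def avg_def by (simp add: add.assoc)
    obtain LT where LT: "(T \<longlongrightarrow> LT) U" using bconv[of T] T01 by blast
    have bnd: "\<bar>Ssum X (\<mu> i) f N - LT\<bar> \<le> inverse (real (Suc N))" for N
    proof -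
      define W where "W n = (\<Sum>k\<in>Kset X f N. (real_of_int k / real (Suc N)) * avg i (lev X f N k) n)" for n
      have W: "(W \<longlongrightarrow> Ssum X (\<mu> i) f N) U"
        unfolding W_def Ssum_def
        by (intro tendsto_sum tendsto_mult_left c1 lev_in[OF sa mf])
      have W2: "W n = (\<Sum>j<Suc n. Ssum X (L (j*m+i)) f N) / real (Suc n)" for n
      proof -
        have "W n = (\<Sum>k\<in>Kset X f N. \<Sum>j<Suc n. (real_of_int k / real (Suc N)) * L (j*m+i) (lev X f N k)) / real (Suc n)"
          unfolding W_def avg_def by (simp only: sum_divide_distrib sum_distrib_left times_divide_eq_right)
        also have "\<dots> = (\<Sum>j<Suc n. \<Sum>k\<in>Kset X f N. (real_of_int k / real (Suc N)) * L (j*m+i) (lev X f N k)) / real (Suc n)"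
          by (subst sum.swap) (rule refl)
        also have "\<dots> = (\<Sum>j<Suc n. Ssum X (L (j*m+i)) f N) / real (Suc n)"
          unfolding Ssum_def by (rule refl)
        finally show ?thesis .
      qed
      have T2: "T n = (\<Sum>j<Suc n. fa_integral X (L (j*m+i)) f) / real (Suc n)" for n
        unfolding T_def f_def by (simp add: L_def markov_op_def)
      have WT: "\<bar>W n - T n\<bar> \<le> inverse (real (Suc N))" for n
      proof -
        have "\<bar>W n - T n\<bar> = \<bar>\<Sum>j<Suc n. Ssum X (L (j*m+i)) f N - fa_integral X (L (j*m+i)) f\<bar> / real (Suc n)"
          unfolding W2 T2 by (simp add: diff_divide_distrib[symmetric] sum_subtractf)
        also have "\<dots> \<le> (\<Sum>j<Suc n. \<bar>Ssum X (L (j*m+i)) f N - fa_integral X (L (j*m+i)) f\<bar>) / real (Suc n)"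
          by (intro divide_right_mono sum_abs) auto
        also have "\<dots> \<le> (of_nat (card {..<Suc n}) * inverse (real (Suc N))) / real (Suc n)"
          by (intro divide_right_mono sum_bounded_above Ssum_conv(2)[OF sa Lpfa mf]) auto
        also have "\<dots> = inverse (real (Suc N))" by simp
        finally show ?thesis .
      qed
      have "((\<lambda>n. \<bar>W n - T n\<bar>) \<longlongrightarrow> \<bar>Ssum X (\<mu> i) f N - LT\<bar>) U"
        by (intro tendsto_intros W LT)
      then show ?thesis using WT by (intro tendsto_le[OF Unb tendsto_const]) auto
    qed
    have "(\<lambda>N. Ssum X (\<mu> i) f N - LT) \<longlonglongrightarrow> 0"
      by (rule Lim_null_comparison[OF _ LIMSEQ_inverse_real_of_nat]) (use bnd in auto)
    then have "Ssum X (\<mu> i) f \<longlonglongrightarrow> LT" by (rule LIM_zero_cancel)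
    then have MI: "markov_op X p (\<mu> i) E = LT"
      unfolding markov_op_def fa_integral_Ssum f_def[symmetric] by (rule limI)
    show ?thesis
    proof (cases "i + 1 < m")
      case True
      have "T = avg (i+1) E" by (rule ext) (simp add: T_def avg_def add.assoc)
      then have "(avg (i+1) E \<longlongrightarrow> LT) U" using LT by simp
      then have "LT = \<mu> (i+1) E" using tendsto_unique[OF Unb _ c1[OF E]] by blast
      then show ?thesis using MI True by simp
    next
      case False
      then have im1: "i + 1 = m" using im by simp
      define g where "g k = L (k*m) E" for k
      have Te: "T n = avg 0 E n + (g (Suc n) - g 0) / real (Suc n)" for n
      proof -
        have "(\<Sum>k<Suc n. L (k*m+i+1) E) = (\<Sum>k<Suc n. g (Suc k))"
        proof -
          have e: "\<And>k. k*m+i+1 = Suc k * m" using im1 by simp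
          show ?thesis unfolding g_def e by (rule refl)
        qed
        also have "\<dots> = (\<Sum>k<Suc n. g k) + (\<Sum>k<Suc n. g (Suc k) - g k)"
          by (simp add: sum_subtractf)
        also have "(\<Sum>k<Suc n. g (Suc k) - g k) = g (Suc n) - g 0"
          by (rule sum_lessThan_telescope)
        finally show ?thesis
          unfolding T_def avg_def g_def by (simp add: add_divide_distrib)
      qed
      have g01: "0 \<le> g k \<and> g k \<le> 1" for k using L01[OF E] by (simp add: g_def)
      have "(\<lambda>n. (g (Suc n) - g 0) / real (Suc n)) \<longlonglongrightarrow> 0"
      proof (rule Lim_null_comparison[where g="\<lambda>n. 2 * inverse (real (Suc n))"])
        show "\<forall>\<^sub>F n in sequentially. norm ((g (Suc n) - g 0) / real (Suc n)) \<le> 2 * inverse (real (Suc n))"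
        proof (intro always_eventually allI)
          fix n
          have "\<bar>g (Suc n) - g 0\<bar> \<le> 2" using g01[of "Suc n"] g01[of 0] by linarith
          then show "norm ((g (Suc n) - g 0) / real (Suc n)) \<le> 2 * inverse (real (Suc n))"
            by (simp add: divide_inverse abs_mult mult_right_mono)
        qed
        show "(\<lambda>n. 2 * inverse (real (Suc n))) \<longlonglongrightarrow> 0"
          using tendsto_mult_left[OF LIMSEQ_inverse_real_of_nat, of 2] by simp
      qed
      then have "((\<lambda>n. (g (Suc n) - g 0) / real (Suc n)) \<longlongrightarrow> 0) U" by (rule tendsto_mono[OF Useq])
      then have "(T \<longlongrightarrow> \<mu> 0 E + 0) U" unfolding Te by (intro tendsto_add c1[OF E])
      then have "LT = \<mu> 0 E" using tendsto_unique[OF Unb LT] by simp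
      then show ?thesis using MI im1 by simp
    qed
  qed
  have Sba: "\<mu> i \<in> S_ba X \<Sigma>" for i
  proof -
    have "is_ba \<Sigma> (\<mu> i)" unfolding is_ba_def
    proof
      show "\<forall>A\<in>\<Sigma>. \<forall>B\<in>\<Sigma>. A \<inter> B = {} \<longrightarrow> \<mu> i (A \<union> B) = \<mu> i A + \<mu> i B"
        using \<mu>pfa unfolding pfa_def by blast
      show "\<exists>c. \<forall>A\<in>\<Sigma>. \<bar>\<mu> i A\<bar> \<le> c"
        using pfa_le1[OF sa \<mu>pfa] by (intro exI[of _ 1]) (auto simp: abs_le_iff)
    qed
    then show ?thesis using \<mu>pfa[of i] unfolding S_ba_def positive_fa_def pfa_def by auto
  qed
  have cyc: "cycle_measures X \<Sigma> p m \<mu>"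
    unfolding cycle_measures_def meas_eq_def
  proof (intro conjI m1 allI impI ballI)
    fix i assume "i < m"
    show "is_ba \<Sigma> (\<mu> i)" "positive_fa \<Sigma> (\<mu> i)" using Sba[of i] unfolding S_ba_def by auto
  next
    fix i j assume ij: "i < m" "j < m" "i \<noteq> j"
    show "\<not> (\<forall>E\<in>\<Sigma>. \<mu> i E = \<mu> j E)"
      using \<mu>D[of i i] \<mu>D[of j i] ij DM[of i] by (metis zero_neq_one)
  next
    fix i E assume "i < m" "E \<in> \<Sigma>"
    then show "markov_op X p (\<mu> i) E = \<mu> ((i + 1) mod m) E" by (rule markov)
  qed
  have sing: "singular_meas X \<Sigma> (\<mu> i) (\<mu> j)" if "i < m" "j < m" "i \<noteq> j" for i j
  proof -
    have "D i \<inter> D j = {}" using sc that unfolding singular_cycle_sets_def by auto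
    moreover have "\<mu> i (D i) = \<mu> i X" "\<mu> j (D j) = \<mu> j X"
      using \<mu>D[of i i] \<mu>D[of j j] that \<mu>pfa unfolding pfa_def by auto
    ultimately show ?thesis unfolding singular_meas_def using DM that by blast
  qed
  show ?thesis
    using cyc sing Sba \<mu>D unfolding singular_cycle_measures_def by (intro exI[of _ \<mu>]) auto
qed

end
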